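(* Consider the finite-horizon betting problem described in the context, with horizon $H\in\mathbb{N}$ and CRRA utility $u_1(\cdot;\alpha)$, $\alpha\ge 0$ (so $u_1(w;\alpha)=w^\alpha/\alpha$ if $\alpha>0$ and $u_1(w;0)=\ln w$). Then the optimal betting policy $\pi^*_{(\theta,u_1,H)}$, defined by the Bellman recursion of the context, is independent of the wealth variable: for every deck $\mathbf d\in\Omega$, every round index $n<H$ and all $w,w'>0$, $$\pi^*_{(\theta,u_1,H)}(\mathbf d,w,n)=\pi^*_{(\theta,u_1,H)}(\mathbf d,w',n),$$ i.e. the set of maximizing bets $b\in[0,0.5]$ in the Bellman equation at state $(\mathbf d,w,n)$ is the same as at $(\mathbf d,w',n)$.
   Context: A player repeatedly plays rounds of a card game (Blackjack) against a dealer, following a fixed in-round decision rule $\theta$. The composition of the deck before each round (the "origin deck") lies in a finite set $\Omega\subset\mathbb{Z}_{\ge0}^{10}$ and the sequence of origin decks $\mathbf d_0,\mathbf d_1,\dots$ (starting from the full deck $\bar{\mathbf d}$) together with the round returns forms a time-homogeneous process: the return $X_\theta^{\mathbf d_n}$ of round $n$ (per unit bet) takes values in $R=\{-2,-1,0,1,1.5,2\}$, and the joint probability $p(\mathbf d',x\mid\mathbf d)=\mathbb P(\mathbf d_{n+1}=\mathbf d',X^{\mathbf d}_\theta=x\mid \mathbf d_n=\mathbf d)$ depends only on $\mathbf d,\mathbf d',x$ (not on $n$ nor on the bets or wealth). Before round $n$ the player, with wealth $W_n$ ($W_0=1$), bets a fraction $\pi_n\in[0,0.5]$ of wealth, and $W_{n+1}=(1+\pi_n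 X_\theta^{\mathbf d_n})W_n$. States are $\psi=(\mathbf d,w,n)$ with $\mathbf d\in\Omega$, $w>0$, $n\in\mathbb Z_{\ge 0}$; a betting policy is a map $\pi$ from states to $[0,0.5]$. The utility is $u_1(w;\alpha)=w^\alpha/\alpha$ for $\alpha>0$ and $\ln w$ for $\alpha=0$. The optimal value and optimal policy for horizon $H$ are defined by $V^*(\mathbf d,w,H)=u_1(w;\alpha)$ and, for $n<H$, $$V^*(\mathbf d,w,n)=\max_{b\in[0,0.5]}\sum_{x\in R}\sum_{\mathbf d'}p(\mathbf d',x\mid\mathbf d)\,V^*(\mathbf d',w(1+bx),n+1),$$ with $\pi^*_{(\theta,u_1,H)}(\mathbf d,w,n)$ the argmax of the same expression. *)

theory Defs
  imports "HOL-Analysis.Analysis" "HOL-Library.Extended_Real"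
begin

text \<open>Decks are compositions in Z_{>=0}^10, represented as lists of naturals of length 10.
  The transition kernel p d d' x = P(d_{n+1} = d', X = x | d_n = d).
  Values are extended reals so that ln 0 = -infinity (wealth can hit 0 when betting
  b = 1/2 and the return is -2).\<close>

type_synonym deck = "nat list"

definition returns :: "real set" where
  "returns = {-2, -1, 0, 1, 3/2, 2}"

definition bets :: "real set" where
  "bets = {0..1/2}"

definition u1 :: "real \<Rightarrow> real \<Rightarrow> ereal" where
  "u1 alpha w = (if alpha = 0 then (if w = 0 then -\<infinity> else ereal (ln w))
                 else ereal (w powr alpha / alpha))"

definition Qval :: "deck set \<Rightarrow> (deck \<Rightarrow> deck \<Rightarrow> real \<Rightarrow> real)
    \<Rightarrow> (deck \<Rightarrow> real \<Rightarrow> ereal) \<Rightarrow> deck \<Rightarrow> real \<Rightarrow> real \<Rightarrow> ereal" where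
  "Qval Omega p V d w b =
     (\<Sum>x\<in>returns. \<Sum>d'\<in>Omega. ereal (p d d' x) * V d' (w * (1 + b * x)))"

text \<open>Value with k rounds remaining (Bellman recursion, max taken as Sup).\<close>
fun Vrem :: "real \<Rightarrow> deck set \<Rightarrow> (deck \<Rightarrow> deck \<Rightarrow> real \<Rightarrow> real)
    \<Rightarrow> nat \<Rightarrow> deck \<Rightarrow> real \<Rightarrow> ereal" where
  "Vrem alpha Omega p 0 d w = u1 alpha w"
| "Vrem alpha Omega p (Suc k) d w =
     (SUP b\<in>bets. Qval Omega p (Vrem alpha Omega p k) d w b)"

definition Vstar :: "real \<Rightarrow> deck set \<Rightarrow> (deck \<Rightarrow> deck \<Rightarrow> real \<Rightarrow> real)
    \<Rightarrow> nat \<Rightarrow> deck \<Rightarrow> real \<Rightarrow> nat \<Rightarrow> ereal" where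
  "Vstar alpha Omega p H d w n = Vrem alpha Omega p (H - n) d w"

definition optimal_bets :: "real \<Rightarrow> deck set \<Rightarrow> (deck \<Rightarrow> deck \<Rightarrow> real \<Rightarrow> real)
    \<Rightarrow> nat \<Rightarrow> deck \<Rightarrow> real \<Rightarrow> nat \<Rightarrow> real set" where
  "optimal_bets alpha Omega p H d w n =
     {b \<in> bets. \<forall>b'\<in>bets.
        Qval Omega p (\<lambda>d' w'. Vstar alpha Omega p H d' w' (Suc n)) d w b' \<le>
        Qval Omega p (\<lambda>d' w'. Vstar alpha Omega p H d' w' (Suc n)) d w b}"

end

theory Submission
  imports Defs
begin

lemma factor_nonneg:
  assumes "b \<in> bets" "x \<in> returns" shows "1 + b * (x::real) \<ge> 0"
proof -
  have "0 \<le> b" "b \<le> 1/2" using assms(1) by (auto simp: bets_def)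
  moreover have "x \<ge> -2" using assms(2) by (auto simp: returns_def)
  ultimately have "b * x \<ge> b * (-2)" by (intro mult_left_mono) auto
  thus ?thesis using \<open>b \<le> 1/2\<close> by linarith
qed

lemma bets_ne: "bets \<noteq> {}" by (auto simp: bets_def)

lemma Vrem_nonneg:
  assumes p: "\<forall>d'\<in>Omega. \<forall>d''. \<forall>x. p d' d'' x \<ge> 0" and a: "alpha > 0"
  shows "d \<in> Omega \<Longrightarrow> w \<ge> 0 \<Longrightarrow> Vrem alpha Omega p k d w \<ge> 0"
proof (induction k arbitrary: d w)
  case 0
  then show ?case using a by (simp add: u1_def)
next
  case (Suc k)
  have "0 \<le> Qval Omega p (Vrem alpha Omega p k) d w 0"
    unfolding Qval_def using Suc p
    by (intro sum_nonneg) (auto intro!: Suc.IH)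
  also have "\<dots> \<le> Vrem alpha Omega p (Suc k) d w"
    by (simp, rule SUP_upper) (auto simp: bets_def)
  finally show ?case .
qed

lemma Qval_log:
  assumes p1: "\<forall>d'\<in>Omega. (\<Sum>x\<in>returns. \<Sum>d''\<in>Omega. p d' d'' x) = 1"
    and c: "c > 0" and V: "\<And>d' v. d' \<in> Omega \<Longrightarrow> v \<ge> 0 \<Longrightarrow> V d' (c * v) = ereal (ln c) + V d' v"
    and d: "d \<in> Omega" and w: "w \<ge> 0" and b: "b \<in> bets"
  shows "Qval Omega p V d (c * w) b = ereal (ln c) + Qval Omega p V d w b"
proof -
  have dist: "ereal q * (ereal l + v) = ereal (q * l) + ereal q * v" for q l v
    by (cases v) (auto simp: algebra_simps)
  have "Qval Omega p V d (c * w) b =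
     (\<Sum>x\<in>returns. \<Sum>d'\<in>Omega. ereal (p d d' x * ln c) + ereal (p d d' x) * V d' (w * (1 + b * x)))"
    unfolding Qval_def
  proof (intro sum.cong refl)
    fix x d' assume "x \<in> returns" "d' \<in> Omega"
    then have "w * (1 + b * x) \<ge> 0" using factor_nonneg[OF b] w by simp
    then have "V d' (c * w * (1 + b * x)) = ereal (ln c) + V d' (w * (1 + b * x))"
      using V[OF \<open>d' \<in> Omega\<close>, of "w * (1 + b * x)"] by (simp add: mult.assoc)
    then show "ereal (p d d' x) * V d' (c * w * (1 + b * x)) =
       ereal (p d d' x * ln c) + ereal (p d d' x) * V d' (w * (1 + b * x))"
      by (simp add: dist)
  qed
  also have "\<dots> = ereal (\<Sum>x\<in>returns. \<Sum>d'\<in>Omega. p d d' x * ln c) + Qval Omega p V d w b"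
    unfolding Qval_def by (simp add: sum.distrib)
  also have "(\<Sum>x\<in>returns. \<Sum>d'\<in>Omega. p d d' x * ln c) = ln c"
    using p1 d by (simp add: sum_distrib_right[symmetric])
  finally show ?thesis .
qed

lemma Vrem_log:
  assumes p1: "\<forall>d'\<in>Omega. (\<Sum>x\<in>returns. \<Sum>d''\<in>Omega. p d' d'' x) = 1"
    and c: "c > 0"
  shows "d \<in> Omega \<Longrightarrow> w \<ge> 0 \<Longrightarrow> Vrem 0 Omega p k d (c * w) = ereal (ln c) + Vrem 0 Omega p k d w"
proof (induction k arbitrary: d w)
  case 0
  then show ?case using c by (auto simp: u1_def ln_mult)
next
  case (Suc k)
  have "Vrem 0 Omega p (Suc k) d (c * w) = (SUP b\<in>bets. ereal (ln c) + Qval Omega p (Vrem 0 Omega p k) d w b)"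
    using Qval_log[OF p1 c _ Suc.prems] Suc.IH by simp
  also have "\<dots> = (SUP b\<in>bets. Qval Omega p (Vrem 0 Omega p k) d w b + ereal (ln c))"
    by (simp add: add.commute)
  also have "\<dots> = Vrem 0 Omega p (Suc k) d w + ereal (ln c)"
    by (subst SUP_ereal_add_left) (auto simp: bets_ne)
  finally show ?case by (simp add: add.commute)
qed

lemma Qval_pow:
  assumes p: "\<forall>d'\<in>Omega. \<forall>d''. \<forall>x. p d' d'' x \<ge> 0"
    and k: "k > 0" and V: "\<And>d' v. d' \<in> Omega \<Longrightarrow> v \<ge> 0 \<Longrightarrow> V d' (c * v) = ereal k * V d' v"
    and Vnn: "\<And>d' v. d' \<in> Omega \<Longrightarrow> v \<ge> 0 \<Longrightarrow> V d' v \<ge> 0"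
    and d: "d \<in> Omega" and w: "w \<ge> 0" and b: "b \<in> bets"
  shows "Qval Omega p V d (c * w) b = ereal k * Qval Omega p V d w b"
proof -
  have nn: "x \<in> returns \<Longrightarrow> d' \<in> Omega \<Longrightarrow> w * (1 + b * x) \<ge> 0" for x d'
    using factor_nonneg[OF b] w by simp
  have "Qval Omega p V d (c * w) b =
     (\<Sum>x\<in>returns. \<Sum>d'\<in>Omega. ereal k * (ereal (p d d' x) * V d' (w * (1 + b * x))))"
    unfolding Qval_def
  proof (intro sum.cong refl)
    fix x d' assume "x \<in> returns" "d' \<in> Omega"
    then have "V d' (c * w * (1 + b * x)) = ereal k * V d' (w * (1 + b * x))"
      using V[OF \<open>d' \<in> Omega\<close> nn] by (simp add: mult.assoc)
    then show "ereal (p d d' x) * V d' (c * w * (1 + b * x)) =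
       ereal k * (ereal (p d d' x) * V d' (w * (1 + b * x)))"
      by (simp add: mult_ac)
  qed
  also have "\<dots> = ereal k * Qval Omega p V d w b"
    unfolding Qval_def
    apply (subst sum_ereal_right_distrib)
     apply (rule sum_nonneg)
    using p d Vnn nn apply (auto intro!: sum.cong sum_ereal_right_distrib[symmetric])
    done
  finally show ?thesis .
qed

lemma Qval_nonneg:
  assumes p: "\<forall>d'\<in>Omega. \<forall>d''. \<forall>x. p d' d'' x \<ge> 0"
    and Vnn: "\<And>d' v. d' \<in> Omega \<Longrightarrow> v \<ge> 0 \<Longrightarrow> V d' v \<ge> 0"
    and d: "d \<in> Omega" and w: "w \<ge> 0" and b: "b \<in> bets"
  shows "Qval Omega p V d w b \<ge> 0"
  unfolding Qval_def using p d Vnn w factor_nonneg[OF b]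
  by (intro sum_nonneg) auto

lemma Vrem_pow:
  assumes p: "\<forall>d'\<in>Omega. \<forall>d''. \<forall>x. p d' d'' x \<ge> 0" and a: "alpha > 0"
    and c: "c > 0"
  shows "d \<in> Omega \<Longrightarrow> w \<ge> 0 \<Longrightarrow> Vrem alpha Omega p k d (c * w) = ereal (c powr alpha) * Vrem alpha Omega p k d w"
proof (induction k arbitrary: d w)
  case 0
  then show ?case using c a by (auto simp: u1_def powr_mult)
next
  case (Suc k)
  have "Vrem alpha Omega p (Suc k) d (c * w) = (SUP b\<in>bets. ereal (c powr alpha) * Qval Omega p (Vrem alpha Omega p k) d w b)"
    using Qval_pow[where V="Vrem alpha Omega p k" and k="c powr alpha", OF p _ Suc.IH Vrem_nonneg[OF p a] Suc.prems] c by simp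
  also have "\<dots> = ereal (c powr alpha) * Vrem alpha Omega p (Suc k) d w"
    using Qval_nonneg[OF p Vrem_nonneg[OF p a] Suc.prems]
    by (subst SUP_ereal_mult_left) (auto simp: bets_ne)
  finally show ?case .
qed

theorem theorem1:
  fixes Omega :: "deck set" and p :: "deck \<Rightarrow> deck \<Rightarrow> real \<Rightarrow> real"
    and alpha :: real and H n :: nat and d :: deck and w w' :: real
  assumes "finite Omega"
    and "\<forall>d'\<in>Omega. length d' = 10"
    and "\<forall>d'\<in>Omega. \<forall>d''. \<forall>x. p d' d'' x \<ge> 0"
    and "\<forall>d'\<in>Omega. (\<Sum>x\<in>returns. \<Sum>d''\<in>Omega. p d' d'' x) = 1"
    and "alpha \<ge> 0"
    and "d \<in> Omega" and "n < H" and "w > 0" and "w' > 0"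
  shows "optimal_bets alpha Omega p H d w n = optimal_bets alpha Omega p H d w' n"
proof -
  define c where "c = w' / w"
  have c: "c > 0" and wc: "w' = c * w" using assms(8,9) by (auto simp: c_def)
  define V where "V = Vrem alpha Omega p (H - Suc n)"
  have VV: "(\<lambda>d' w'. Vstar alpha Omega p H d' w' (Suc n)) = V"
    by (simp add: V_def Vstar_def fun_eq_iff)
  have key: "\<exists>f. (\<forall>b\<in>bets. Qval Omega p V d w' b = f (Qval Omega p V d w b)) \<and>
      (\<forall>x y. f x \<le> f y \<longleftrightarrow> x \<le> y)"
  proof (cases "alpha = 0")
    case True
    show ?thesis
    proof (intro exI conjI ballI allI)
      fix b assume "b \<in> bets"
      then show "Qval Omega p V d w' b = ereal (ln c) + Qval Omega p V d w b"
        unfolding wc V_def True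
        using Qval_log[where V="Vrem 0 Omega p (H - Suc n)", OF assms(4) c Vrem_log[OF assms(4) c] assms(6)] assms(8) by simp
    next
      fix x y :: ereal show "ereal (ln c) + x \<le> ereal (ln c) + y \<longleftrightarrow> x \<le> y"
        by (simp add: ereal_add_le_add_iff)
    qed
  next
    case False
    then have a: "alpha > 0" using assms(5) by simp
    show ?thesis
    proof (intro exI conjI ballI allI)
      fix b assume "b \<in> bets"
      then show "Qval Omega p V d w' b = ereal (c powr alpha) * Qval Omega p V d w b"
        unfolding wc V_def
        using Qval_pow[where V="Vrem alpha Omega p (H - Suc n)" and k="c powr alpha", OF assms(3) _ Vrem_pow[OF assms(3) a c] Vrem_nonneg[OF assms(3) a] assms(6)] assms(8) c
        by simp
    next
      fix x y :: ereal show "ereal (c powr alpha) * x \<le> ereal (c powr alpha) * y \<longleftrightarrow> x \<le> y"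
        using c by (simp add: ereal_mult_le_mult_iff)
    qed
  qed
  then obtain f where f1: "\<forall>b\<in>bets. Qval Omega p V d w' b = f (Qval Omega p V d w b)"
    and f2: "\<forall>x y. f x \<le> f y \<longleftrightarrow> x \<le> y" by blast
  show ?thesis unfolding optimal_bets_def VV using f1 f2 by auto
qed

end
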